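(* Let $v=[q;w_1,\ldots,w_n]$ be a WVG and let $v'$ be obtained by splitting player $i$ into two sub-players $i',i''$ with nonnegative weights $w_{i'}+w_{i''}=w_i$. Then $\eta_{i'}(v')+\eta_{i''}(v')=2\eta_i(v)$, and for every player $x\neq i$, $\eta_x(v)\le \eta_x(v')$.
   Context: A weighted voting game (WVG) $v=[q;w_1,\ldots,w_n]$ has player set $N=\{1,\ldots,n\}$, nonnegative weights $w_j$ and quota $q$ with $0<q\le \sum_j w_j$; a coalition $S\subseteq N$ is winning iff $\sum_{j\in S}w_j\ge q$. Player $j$ is critical in a coalition $S$ if $S$ is winning and $S\setminus\{j\}$ is losing; $\eta_j(v)$ is the number of coalitions in which $j$ is critical. Splitting player $i$ into sub-players with nonnegative weights summing to $w_i$ produces the WVG with the same quota in which $i$ is replaced by the sub-players and all other players keep their weights. *)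

theory Defs
  imports Complex_Main
begin

definition wvg :: "'a set \<Rightarrow> ('a \<Rightarrow> real) \<Rightarrow> real \<Rightarrow> bool" where
  "wvg N w q \<longleftrightarrow> finite N \<and> (\<forall>j\<in>N. 0 \<le> w j) \<and> 0 < q \<and> q \<le> sum w N"

definition winning :: "'a set \<Rightarrow> ('a \<Rightarrow> real) \<Rightarrow> real \<Rightarrow> 'a set \<Rightarrow> bool" where
  "winning N w q S \<longleftrightarrow> S \<subseteq> N \<and> q \<le> sum w S"

definition critical :: "'a set \<Rightarrow> ('a \<Rightarrow> real) \<Rightarrow> real \<Rightarrow> 'a \<Rightarrow> 'a set \<Rightarrow> bool" where
  "critical N w q j S \<longleftrightarrow> winning N w q S \<and> \<not> winning N w q (S - {j})"

definition eta :: "'a set \<Rightarrow> ('a \<Rightarrow> real) \<Rightarrow> real \<Rightarrow> 'a \<Rightarrow> nat" where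
  "eta N w q j = card {S. S \<subseteq> N \<and> critical N w q j S}"

definition split_player ::
  "'a set \<Rightarrow> ('a \<Rightarrow> real) \<Rightarrow> 'a \<Rightarrow> 'a \<Rightarrow> 'a \<Rightarrow> 'a set \<Rightarrow> ('a \<Rightarrow> real) \<Rightarrow> bool" where
  "split_player N w i i1 i2 N' w' \<longleftrightarrow>
     i \<in> N \<and> i1 \<noteq> i2 \<and> i1 \<notin> N - {i} \<and> i2 \<notin> N - {i} \<and>
     N' = (N - {i}) \<union> {i1, i2} \<and>
     0 \<le> w' i1 \<and> 0 \<le> w' i2 \<and> w' i1 + w' i2 = w i \<and>
     (\<forall>x\<in>N - {i}. w' x = w x)"

end

theory Submission
  imports Defs
begin

definition cr :: "('a \<Rightarrow> real) \<Rightarrow> real \<Rightarrow> 'a \<Rightarrow> 'a set \<Rightarrow> nat" where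
  "cr W q x S = (if q \<le> sum W S \<and> \<not> q \<le> sum W (S - {x}) then 1 else 0)"

lemma eta_sum:
  assumes "finite N"
  shows "eta N w q j = (\<Sum>S\<in>Pow N. cr w q j S)"
proof -
  have "{S. S \<subseteq> N \<and> critical N w q j S} =
        {S\<in>Pow N. q \<le> sum w S \<and> \<not> q \<le> sum w (S - {j})}"
    by (auto simp: critical_def winning_def)
  then have "eta N w q j = card {S\<in>Pow N. q \<le> sum w S \<and> \<not> q \<le> sum w (S - {j})}"
    unfolding eta_def by simp
  also have "\<dots> = (\<Sum>S\<in>{S\<in>Pow N. q \<le> sum w S \<and> \<not> q \<le> sum w (S - {j})}. 1)"
    by (rule card_eq_sum)
  also have "\<dots> = (\<Sum>S\<in>Pow N. cr w q j S)"
    unfolding cr_def using assms by (rule sum.inter_filter[OF finite_Pow_iff[THEN iffD2]])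
  finally show ?thesis .
qed

lemma sum_Pow_insert:
  assumes "finite M" "a \<notin> M"
  shows "(\<Sum>S\<in>Pow (insert a M). g S) = (\<Sum>S\<in>Pow M. g S) + (\<Sum>S\<in>Pow M. g (insert a S))"
proof -
  have d: "Pow M \<inter> insert a ` Pow M = {}" using assms(2) by auto
  have inj: "inj_on (insert a) (Pow M)"
  proof (rule inj_onI)
    fix x y assume xy: "x \<in> Pow M" "y \<in> Pow M" "insert a x = insert a y"
    then have "a \<notin> x" "a \<notin> y" using assms(2) by auto
    then show "x = y" by (metis Diff_insert_absorb xy(3))
  qed
  have "(\<Sum>S\<in>Pow (insert a M). g S) = (\<Sum>S\<in>Pow M. g S) + (\<Sum>S\<in>insert a ` Pow M. g S)"
    unfolding Pow_insert using d assms(1) by (simp add: sum.union_disjoint)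
  also have "(\<Sum>S\<in>insert a ` Pow M. g S) = (\<Sum>S\<in>Pow M. g (insert a S))"
    using inj by (simp add: sum.reindex)
  finally show ?thesis .
qed

lemma key:
  fixes a b t q :: real
  assumes "0 \<le> a" "0 \<le> b"
  shows "(if q \<le> a + t \<and> \<not> q \<le> t then 1 else 0) + (if q \<le> a + b + t \<and> \<not> q \<le> b + t then 1 else 0)
       + ((if q \<le> b + t \<and> \<not> q \<le> t then 1 else 0) + (if q \<le> a + b + t \<and> \<not> q \<le> a + t then 1 else 0))
       = 2 * (if q \<le> a + b + t \<and> \<not> q \<le> t then 1 else (0::nat))"
  using assms by (cases "q \<le> t"; cases "q \<le> a + t"; cases "q \<le> b + t"; cases "q \<le> a + b + t") auto

theorem mainTheorem2:
  fixes N N' :: "'a set" and w w' :: "'a \<Rightarrow> real" and q :: real and i i1 i2 :: 'a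
  assumes "wvg N w q"
    and "split_player N w i i1 i2 N' w'"
  shows "eta N' w' q i1 + eta N' w' q i2 = 2 * eta N w q i \<and>
         (\<forall>x\<in>N. x \<noteq> i \<longrightarrow> eta N w q x \<le> eta N' w' q x)"
proof -
  define M where "M = N - {i}"
  have fin: "finite M" using assms(1) by (simp add: wvg_def M_def)
  have iN: "i \<in> N" and ne: "i1 \<noteq> i2" and i1M: "i1 \<notin> M" and i2M: "i2 \<notin> M"
    and N'eq: "N' = insert i1 (insert i2 M)" and a0: "0 \<le> w' i1" and b0: "0 \<le> w' i2"
    and ab: "w' i1 + w' i2 = w i" and agree: "\<forall>x\<in>M. w' x = w x"
    using assms(2) unfolding split_player_def M_def by simp_all
  have Neq: "N = insert i M" using iN by (auto simp: M_def)
  have iM: "i \<notin> M" by (simp add: M_def)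
  have i1M2: "i1 \<notin> insert i2 M" using ne i1M by auto
  have finN: "finite N" "finite N'" using fin Neq N'eq by auto
  have sw: "sum w' T = sum w T" if "T \<subseteq> M" for T
    using agree that by (intro sum.cong) auto
  have sw2: "sum w' (insert i1 (insert i2 T)) = w' i1 + w' i2 + sum w T" if "T \<subseteq> M" for T
  proof -
    have "finite T" using that fin finite_subset by blast
    moreover have "i2 \<notin> T" "i1 \<notin> insert i2 T" using that i2M i1M ne by auto
    ultimately show ?thesis using sw[OF that] by simp
  qed
  have sw1: "sum w' (insert i1 T) = w' i1 + sum w T" if "T \<subseteq> M" for T
  proof -
    have "finite T" using that fin finite_subset by blast
    moreover have "i1 \<notin> T" using that i1M by auto
    ultimately show ?thesis using sw[OF that] by simp
  qed
  have sw1': "sum w' (insert i2 T) = w' i2 + sum w T" if "T \<subseteq> M" for T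
  proof -
    have "finite T" using that fin finite_subset by blast
    moreover have "i2 \<notin> T" using that i2M by auto
    ultimately show ?thesis using sw[OF that] by simp
  qed
  have swi: "sum w (insert i T) = w i + sum w T" if "T \<subseteq> M" for T
  proof -
    have "finite T" using that fin finite_subset by blast
    moreover have "i \<notin> T" using that iM by auto
    ultimately show ?thesis by simp
  qed
  have exp': "(\<Sum>S\<in>Pow N'. g S) = (\<Sum>S\<in>Pow M. g S + g (insert i2 S) + g (insert i1 S) + g (insert i1 (insert i2 S)))" for g
  proof -
    have f2: "finite (insert i2 M)" using fin by simp
    show ?thesis
      unfolding N'eq sum_Pow_insert[OF f2 i1M2] sum_Pow_insert[OF fin i2M]
      by (simp add: sum.distrib add_ac)
  qed
  have exp: "(\<Sum>S\<in>Pow N. g S) = (\<Sum>S\<in>Pow M. g S + g (insert i S))" for g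
    unfolding Neq using fin iM by (simp add: sum_Pow_insert sum.distrib)
  have part1: "eta N' w' q i1 + eta N' w' q i2 = 2 * eta N w q i"
  proof -
    have L: "eta N' w' q i1 + eta N' w' q i2 = (\<Sum>T\<in>Pow M.
        cr w' q i1 T + cr w' q i1 (insert i2 T) + cr w' q i1 (insert i1 T) + cr w' q i1 (insert i1 (insert i2 T))
      + (cr w' q i2 T + cr w' q i2 (insert i2 T) + cr w' q i2 (insert i1 T) + cr w' q i2 (insert i1 (insert i2 T))))"
      using finN by (simp add: eta_sum exp' sum.distrib)
    have R: "2 * eta N w q i = (\<Sum>T\<in>Pow M. 2 * (cr w q i T + cr w q i (insert i T)))"
      using finN by (simp add: eta_sum exp sum_distrib_left)
    have pt: "cr w' q i1 T + cr w' q i1 (insert i2 T) + cr w' q i1 (insert i1 T) + cr w' q i1 (insert i1 (insert i2 T))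
      + (cr w' q i2 T + cr w' q i2 (insert i2 T) + cr w' q i2 (insert i1 T) + cr w' q i2 (insert i1 (insert i2 T)))
      = 2 * (cr w q i T + cr w q i (insert i T))" if T: "T \<in> Pow M" for T
    proof -
      have TM: "T \<subseteq> M" using T by auto
      have e1: "T - {i1} = T" "T - {i2} = T" "T - {i} = T" using TM i1M i2M iM by auto
      have e2: "insert i2 T - {i1} = insert i2 T" "insert i1 T - {i2} = insert i1 T"
        using TM i1M i2M ne by auto
      have e3: "insert i2 T - {i2} = T" "insert i1 T - {i1} = T" "insert i T - {i} = T"
        using TM i1M i2M iM by auto
      have e4: "insert i1 (insert i2 T) - {i1} = insert i2 T"
               "insert i1 (insert i2 T) - {i2} = insert i1 T"
        using TM i1M i2M ne by auto
      let ?t = "sum w T" and ?a = "w' i1" and ?b = "w' i2"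
      have z: "cr w' q i1 T = 0" "cr w' q i1 (insert i2 T) = 0" "cr w' q i2 T = 0"
              "cr w' q i2 (insert i1 T) = 0" "cr w q i T = 0"
        by (simp_all add: cr_def e1 e2)
      have A: "cr w' q i1 (insert i1 T) = (if q \<le> ?a + ?t \<and> \<not> q \<le> ?t then 1 else 0)"
        by (simp add: cr_def e3 sw1[OF TM] sw[OF TM])
      have B: "cr w' q i1 (insert i1 (insert i2 T)) = (if q \<le> ?a + ?b + ?t \<and> \<not> q \<le> ?b + ?t then 1 else 0)"
        by (simp add: cr_def e4 sw2[OF TM] sw1'[OF TM])
      have C: "cr w' q i2 (insert i2 T) = (if q \<le> ?b + ?t \<and> \<not> q \<le> ?t then 1 else 0)"
        by (simp add: cr_def e3 sw1'[OF TM] sw[OF TM])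
      have D: "cr w' q i2 (insert i1 (insert i2 T)) = (if q \<le> ?a + ?b + ?t \<and> \<not> q \<le> ?a + ?t then 1 else 0)"
        by (simp add: cr_def e4 sw2[OF TM] sw1[OF TM])
      have E: "cr w q i (insert i T) = (if q \<le> ?a + ?b + ?t \<and> \<not> q \<le> ?t then 1 else 0)"
        by (simp add: cr_def e3 swi[OF TM] ab)
      show ?thesis
        unfolding z A B C D E add_0_left add_0_right
        by (rule key[OF a0 b0])
    qed
    show ?thesis unfolding L R
      by (rule sum.cong[OF refl]) (rule pt)
  qed
  have part2: "eta N w q x \<le> eta N' w' q x" if "x \<in> N" "x \<noteq> i" for x
  proof -
    have xM: "x \<in> M" using that by (simp add: M_def)
    have x1: "x \<noteq> i1" "x \<noteq> i2" using xM i1M i2M by auto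
    have pt: "cr w q x T + cr w q x (insert i T) \<le>
       cr w' q x T + cr w' q x (insert i2 T) + cr w' q x (insert i1 T) + cr w' q x (insert i1 (insert i2 T))"
      if TP: "T \<in> Pow M" for T
    proof -
      have TM: "T \<subseteq> M" using TP by auto
      have TxM: "T - {x} \<subseteq> M" using TM by auto
      have e: "insert i T - {x} = insert i (T - {x})"
              "insert i1 (insert i2 T) - {x} = insert i1 (insert i2 (T - {x}))"
        using x1 xM iM by auto
      have "cr w q x T = cr w' q x T"
        unfolding cr_def sw[OF TM] sw[OF TxM] by simp
      moreover have "cr w q x (insert i T) = cr w' q x (insert i1 (insert i2 T))"
        unfolding cr_def e sw2[OF TM] sw2[OF TxM] swi[OF TM] swi[OF TxM] ab by simp
      ultimately show ?thesis by simp
    qed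
    show ?thesis
      unfolding eta_sum[OF finN(1)] eta_sum[OF finN(2)] exp exp'
      by (rule sum_mono) (rule pt)
  qed
  show ?thesis using part1 part2 by blast
qed

end
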